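(* Let $L$ be a PG-lattice and $M$ a faithful multiplication PG-lattice $L$-module, and let $\delta_1:M\to M$ be $\delta_1(A)=(\sqrt{(A:I_M)})I_M$. Then $\delta_1(A\wedge B)=\delta_1(A)\wedge\delta_1(B)$ for all $A,B\in M$.
   Context: $L$ is a multiplicative lattice (complete lattice with commutative, associative multiplication distributing over arbitrary joins, identity $1$, least $0$), compactly generated, $1$ compact, finite products of compact elements compact; $L_\ast$ = compact elements. An $L$-module is a complete lattice $M$ (least $O_M$, greatest $I_M$) with product $aB\in M$ satisfying $(\bigvee a_\alpha)A=\bigvee(a_\alpha A)$, $a(\bigvee A_\alpha)=\bigvee(aA_\alpha)$, $(ab)A=a(bA)$, $1A=A$, $0A=O_M$. $(A:B)=\bigvee\{x\in L:xB\leqslant A\}$; $\sqrt a=\bigvee\{x\in L_\ast:x^n\leqslant a\text{ for some }n\in\mathbb Z_+\}$. $e\in L$ is principal if $a\wedge be=((a:e)\wedge b)e$ and $(ae\vee b):e=(b:e)\vee a$ for all $a,b$; $L$ is a PG-lattice if every element is a join of principal elements. $N\in M$ is principal if $(b\wedge(B:N))N=bN\wedge B$ and $b\vee(B:N)=((bN\vee B):N)$ for all $b\in L,B\in M$; $M$ is a PG-lattice module if every element is a join of principal elements. $M$ is faithful if $(O_M:I_M)=0$; a multiplication module if every element of $M$ is $aI_M$ for some $a\in L$. *)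

theory Defs
  imports Main
begin

text \<open>Multiplicative lattices: the carrier is a complete lattice with a commutative
monoid multiplication (identity 1); the least element 0 is bot.\<close>

definition lcompact :: "'a::complete_lattice \<Rightarrow> bool" where
  "lcompact x \<longleftrightarrow> (\<forall>S. x \<le> Sup S \<longrightarrow> (\<exists>F. F \<subseteq> S \<and> finite F \<and> x \<le> Sup F))"

definition multiplicative_lattice :: "'a::{complete_lattice, comm_monoid_mult} itself \<Rightarrow> bool" where
  "multiplicative_lattice (T :: 'a itself) \<longleftrightarrow>
     (\<forall>(a::'a) S. a * Sup S = Sup ((\<lambda>s. a * s) ` S)) \<and>
     (1::'a) = top \<and>
     (\<forall>x::'a. \<exists>S. (\<forall>s\<in>S. lcompact s) \<and> x = Sup S) \<and>
     lcompact (1::'a) \<and>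
     (\<forall>x y::'a. lcompact x \<longrightarrow> lcompact y \<longrightarrow> lcompact (x * y))"

definition lres :: "'a::{complete_lattice, comm_monoid_mult} \<Rightarrow> 'a \<Rightarrow> 'a" where
  "lres a e = Sup {x. x * e \<le> a}"

definition lrad :: "'a::{complete_lattice, comm_monoid_mult} \<Rightarrow> 'a" where
  "lrad a = Sup {x. lcompact x \<and> (\<exists>n::nat. n \<ge> 1 \<and> x ^ n \<le> a)}"

definition principal_elem :: "'a::{complete_lattice, comm_monoid_mult} \<Rightarrow> bool" where
  "principal_elem e \<longleftrightarrow>
     (\<forall>a b. inf a (b * e) = (inf (lres a e) b) * e) \<and>
     (\<forall>a b. lres (sup (a * e) b) e = sup (lres b e) a)"

definition PG_lattice :: "'a::{complete_lattice, comm_monoid_mult} itself \<Rightarrow> bool" where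
  "PG_lattice (T :: 'a itself) \<longleftrightarrow>
     (\<forall>x::'a. \<exists>S. (\<forall>e\<in>S. principal_elem e) \<and> x = Sup S)"

text \<open>L-modules: act a A is the product aA.\<close>
definition lattice_module ::
  "('a::{complete_lattice, comm_monoid_mult} \<Rightarrow> 'm::complete_lattice \<Rightarrow> 'm) \<Rightarrow> bool" where
  "lattice_module act \<longleftrightarrow>
     (\<forall>S A. act (Sup S) A = Sup ((\<lambda>a. act a A) ` S)) \<and>
     (\<forall>a S. act a (Sup S) = Sup (act a ` S)) \<and>
     (\<forall>a b A. act (a * b) A = act a (act b A)) \<and>
     (\<forall>A. act 1 A = A) \<and>
     (\<forall>A. act bot A = bot)"

definition mres ::
  "('a::{complete_lattice, comm_monoid_mult} \<Rightarrow> 'm::complete_lattice \<Rightarrow> 'm) \<Rightarrow> 'm \<Rightarrow> 'm \<Rightarrow> 'a" where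
  "mres act A B = Sup {x. act x B \<le> A}"

definition principal_melem ::
  "('a::{complete_lattice, comm_monoid_mult} \<Rightarrow> 'm::complete_lattice \<Rightarrow> 'm) \<Rightarrow> 'm \<Rightarrow> bool" where
  "principal_melem act N \<longleftrightarrow>
     (\<forall>b B. act (inf b (mres act B N)) N = inf (act b N) B) \<and>
     (\<forall>b B. sup b (mres act B N) = mres act (sup (act b N) B) N)"

definition PG_lattice_module ::
  "('a::{complete_lattice, comm_monoid_mult} \<Rightarrow> 'm::complete_lattice \<Rightarrow> 'm) \<Rightarrow> bool" where
  "PG_lattice_module act \<longleftrightarrow>
     (\<forall>A::'m. \<exists>S. (\<forall>N\<in>S. principal_melem act N) \<and> A = Sup S)"

definition faithful_module ::
  "('a::{complete_lattice, comm_monoid_mult} \<Rightarrow> 'm::complete_lattice \<Rightarrow> 'm) \<Rightarrow> bool" where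
  "faithful_module act \<longleftrightarrow> mres act bot top = bot"

definition multiplication_module ::
  "('a::{complete_lattice, comm_monoid_mult} \<Rightarrow> 'm::complete_lattice \<Rightarrow> 'm) \<Rightarrow> bool" where
  "multiplication_module act \<longleftrightarrow> (\<forall>A::'m. \<exists>a. A = act a top)"

definition delta1 ::
  "('a::{complete_lattice, comm_monoid_mult} \<Rightarrow> 'm::complete_lattice \<Rightarrow> 'm) \<Rightarrow> 'm \<Rightarrow> 'm" where
  "delta1 act A = act (lrad (mres act A top)) top"

end

theory Submission
  imports Defs
begin

unbundle lattice_syntax
context
  fixes T :: "'a::{complete_lattice, comm_monoid_mult} itself"
  assumes MLA: "multiplicative_lattice TYPE('a)"
begin

lemma ml_dist: "(a::'a) * Sup S = Sup ((\<lambda>s. a * s) ` S)"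
  using MLA unfolding multiplicative_lattice_def by blast

lemma ml_one: "(1::'a) = top" using MLA unfolding multiplicative_lattice_def by blast

lemma ml_sup: "(a::'a) * sup x y = sup (a*x) (a*y)"
  using ml_dist[of a "{x,y}"] by simp

lemma ml_mono: "(x::'a) \<le> y \<Longrightarrow> a * x \<le> a * y"
  by (metis le_iff_sup ml_sup)

lemma ml_mono2: "(x::'a) \<le> y \<Longrightarrow> a \<le> b \<Longrightarrow> a * x \<le> b * y"
  by (metis ml_mono mult.commute order_trans)

lemma ml_le: "(a::'a) * x \<le> a"
  by (metis ml_mono ml_one top_greatest mult.right_neutral)

lemma ml_le': "(a::'a) * x \<le> x"
  by (metis ml_le mult.commute)

lemma ml_bot: "(a::'a) * bot = bot"
  using ml_dist[of a "{}"] by simp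

lemma pow_mono: "(x::'a) \<le> y \<Longrightarrow> x ^ n \<le> y ^ n"
  by (induction n) (auto intro: ml_mono2)

lemma pow_add_le: "(x::'a) ^ (k + l) \<le> x ^ k"
  by (simp add: power_add ml_le)

lemma pow_sup: "((y::'a) \<squnion> s) ^ (i + j) \<le> y ^ i \<squnion> s ^ j"
proof (induction "i + j" arbitrary: i j)
  case 0 then show ?case by simp
next
  case (Suc n)
  have "(y \<squnion> s) ^ (i + j) = (y \<squnion> s) * (y \<squnion> s) ^ n" using Suc(2)[symmetric] by simp
  also have "\<dots> = y * (y \<squnion> s) ^ n \<squnion> s * (y \<squnion> s) ^ n"
    by (metis ml_sup mult.commute)
  also have "\<dots> \<le> y ^ i \<squnion> s ^ j"
  proof (rule sup_least)
    show "y * (y \<squnion> s) ^ n \<le> y ^ i \<squnion> s ^ j"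
    proof (cases i)
      case 0 then show ?thesis by (metis ml_one power_0 sup_top_left top_greatest)
    next
      case (Suc i')
      then have "(y \<squnion> s) ^ n \<le> y ^ i' \<squnion> s ^ j" using Suc.hyps(1)[of i' j] Suc.hyps(2) by simp
      then have "y * (y \<squnion> s) ^ n \<le> y * (y ^ i' \<squnion> s ^ j)" by (rule ml_mono)
      also have "\<dots> = y ^ i \<squnion> y * s ^ j" using Suc by (simp add: ml_sup)
      also have "\<dots> \<le> y ^ i \<squnion> s ^ j" using ml_le' by (meson sup_mono order_refl)
      finally show ?thesis .
    qed
    show "s * (y \<squnion> s) ^ n \<le> y ^ i \<squnion> s ^ j"
    proof (cases j)
      case 0 then show ?thesis by (metis ml_one power_0 sup_top_right top_greatest)
    next
      case (Suc j')
      then have "(y \<squnion> s) ^ n \<le> y ^ i \<squnion> s ^ j'" using Suc.hyps(1)[of i j'] Suc.hyps(2) by simp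
      then have "s * (y \<squnion> s) ^ n \<le> s * (y ^ i \<squnion> s ^ j')" by (rule ml_mono)
      also have "\<dots> = s * y ^ i \<squnion> s ^ j" using Suc by (simp add: ml_sup)
      also have "\<dots> \<le> y ^ i \<squnion> s ^ j" using ml_le' by (meson sup_mono order_refl)
      finally show ?thesis .
    qed
  qed
  finally show ?case .
qed

definition nilp :: "'a \<Rightarrow> 'a \<Rightarrow> bool" where
  "nilp a w \<longleftrightarrow> (\<exists>k::nat. k \<ge> 1 \<and> w ^ k \<le> a)"

lemma nilp_sup: "nilp a y \<Longrightarrow> nilp a s \<Longrightarrow> nilp a (y \<squnion> s)"
  unfolding nilp_def
proof (elim exE conjE)
  fix m k assume "m \<ge> 1" "y ^ m \<le> a" "k \<ge> 1" "s ^ k \<le> (a::'a)"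
  then show "\<exists>k'. k' \<ge> 1 \<and> (y \<squnion> s) ^ k' \<le> a"
  proof (intro exI conjI)
    show "1 \<le> m + k" using \<open>m \<ge> 1\<close> by simp
    have "(y \<squnion> s) ^ (m + k) \<le> y ^ m \<squnion> s ^ k" by (rule pow_sup)
    also have "\<dots> \<le> a" using \<open>y ^ m \<le> a\<close> \<open>s ^ k \<le> a\<close> by (rule sup_least)
    finally show "(y \<squnion> s) ^ (m + k) \<le> a" .
  qed
qed

lemma nilp_Sup: "finite F \<Longrightarrow> \<forall>y\<in>F. nilp a y \<Longrightarrow> nilp a (Sup F)"
proof (induction F rule: finite_induct)
  case empty
  then show ?case unfolding nilp_def by (intro exI[of _ 1]) simp
next
  case (insert x F)
  then show ?case by (simp add: nilp_sup)
qed

lemma rad_compact: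
  fixes x a :: 'a
  assumes "lcompact x" "x \<le> lrad a"
  shows "\<exists>k::nat. k \<ge> 1 \<and> x ^ k \<le> a"
proof -
  obtain F where F: "F \<subseteq> {x. lcompact x \<and> (\<exists>n::nat. n \<ge> 1 \<and> x ^ n \<le> a)}" "finite F" "x \<le> Sup F"
  proof -
    let ?S = "{x. lcompact x \<and> (\<exists>n::nat. n \<ge> 1 \<and> x ^ n \<le> a)}"
    have "x \<le> Sup ?S" using assms(2) unfolding lrad_def .
    then have "\<exists>F. F \<subseteq> ?S \<and> finite F \<and> x \<le> Sup F" using assms(1) unfolding lcompact_def by blast
    then show ?thesis using that by blast
  qed
  have "nilp a (Sup F)" using F by (intro nilp_Sup) (auto simp: nilp_def)
  then obtain k where "k \<ge> 1" "(Sup F) ^ k \<le> a" unfolding nilp_def by blast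
  then show ?thesis using pow_mono[OF F(3)] by (meson order_trans)
qed

lemma compgen: "\<exists>S. (\<forall>s\<in>S. lcompact s) \<and> (x::'a) = Sup S"
  using MLA unfolding multiplicative_lattice_def by blast

lemma compmult: "lcompact (x::'a) \<Longrightarrow> lcompact y \<Longrightarrow> lcompact (x * y)"
  using MLA unfolding multiplicative_lattice_def by blast

lemma rad_mono: "(a::'a) \<le> b \<Longrightarrow> lrad a \<le> lrad b"
  unfolding lrad_def by (rule Sup_subset_mono) (auto intro: order_trans)

lemma key_rad:
  assumes "(n::'a) * n \<le> lrad a" "n * n \<le> lrad b"
  shows "n \<le> lrad (inf a b)"
proof -
  obtain S where S: "\<forall>s\<in>S. lcompact s" "n = Sup S" using compgen by blast
  have "y \<le> lrad (inf a b)" if yS: "y \<in> S" for y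
  proof -
    have yc0: "lcompact y" using S yS by blast
    have yc: "lcompact (y*y)" using compmult[OF yc0 yc0] .
    have yn: "y \<le> n" using S yS by (simp add: Sup_upper)
    have "y * y \<le> n * n" using yn yn by (rule ml_mono2)
    then have ya: "y * y \<le> lrad a" and yb: "y * y \<le> lrad b" using assms by (blast intro: order_trans)+
    obtain k where k: "k \<ge> 1" "(y*y)^k \<le> a" using rad_compact[OF yc ya] by blast
    obtain l where l: "l \<ge> 1" "(y*y)^l \<le> b" using rad_compact[OF yc yb] by blast
    have "(y*y)^(k+l) \<le> a" using pow_add_le[of "y*y" k l] k(2) by (rule order_trans)
    moreover have "(y*y)^(l+k) \<le> b" using pow_add_le[of "y*y" l k] l(2) by (rule order_trans)
    moreover have "y ^ (2*(k+l)) = (y*y)^(k+l)" by (simp only: power_mult power2_eq_square)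
    ultimately have le: "y ^ (2*(k+l)) \<le> inf a b" by (simp add: add.commute)
    have "y \<in> {x. lcompact x \<and> (\<exists>n::nat. n \<ge> 1 \<and> x ^ n \<le> inf a b)}"
      using yc0 le k(1) by (intro CollectI conjI exI[of _ "2*(k+l)"]) auto
    then show ?thesis unfolding lrad_def by (rule Sup_upper)
  qed
  then show ?thesis using S by (simp add: Sup_least)
qed

end

lemma act_Sup1: "lattice_module act \<Longrightarrow> act (Sup S) A = Sup ((\<lambda>a. act a A) ` S)"
  unfolding lattice_module_def by blast
lemma act_Sup2: "lattice_module act \<Longrightarrow> act a (Sup S) = Sup (act a ` S)"
  unfolding lattice_module_def by blast
lemma act_mul: "lattice_module act \<Longrightarrow> act (a * b) A = act a (act b A)"
  unfolding lattice_module_def by blast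
lemma act_mono1: "lattice_module act \<Longrightarrow> x \<le> y \<Longrightarrow> act x A \<le> act y A"
  using act_Sup1[of act "{x,y}" A] by (simp add: le_iff_sup)
lemma act_mono2: "lattice_module act \<Longrightarrow> A \<le> B \<Longrightarrow> act a A \<le> act a B"
  using act_Sup2[of act a "{A,B}"] by (simp add: le_iff_sup)
lemma mres_le: "lattice_module act \<Longrightarrow> act (mres act X N) N \<le> X"
  unfolding mres_def by (simp add: act_Sup1 SUP_le_iff)
lemma mres_ge: "act x N \<le> X \<Longrightarrow> x \<le> mres act X N"
  unfolding mres_def by (rule Sup_upper) simp
lemma mres_mono: "X \<le> Y \<Longrightarrow> mres act X N \<le> mres act Y N"
  unfolding mres_def by (rule Sup_subset_mono) (auto intro: order_trans)

theorem theorem3p4: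
  fixes act :: "'a::{complete_lattice, comm_monoid_mult} \<Rightarrow> 'm::complete_lattice \<Rightarrow> 'm"
  assumes "multiplicative_lattice TYPE('a)"
    and "PG_lattice TYPE('a)"
    and "lattice_module act"
    and "faithful_module act"
    and "multiplication_module act"
    and "PG_lattice_module act"
  shows "delta1 act (inf A B) = inf (delta1 act A) (delta1 act B)"
proof -
  note LM = assms(3)
  define a where "a = mres act A top"
  define b where "b = mres act B top"
  define r where "r = lrad (mres act (inf A B) top)"
  have aA: "act a top \<le> A" unfolding a_def using mres_le[OF LM] .
  have bB: "act b top \<le> B" unfolding b_def using mres_le[OF LM] .
  have abr: "inf a b \<le> mres act (inf A B) top"
  proof (rule mres_ge)
    have "act (inf a b) top \<le> act a top" by (rule act_mono1[OF LM]) simp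
    moreover have "act (inf a b) top \<le> act b top" by (rule act_mono1[OF LM]) simp
    ultimately show "act (inf a b) top \<le> inf A B" using aA bB by (meson le_inf_iff order_trans)
  qed
  have le1: "delta1 act (inf A B) \<le> inf (delta1 act A) (delta1 act B)"
    unfolding delta1_def
  proof (rule le_infI)
    show "act (lrad (mres act (A \<sqinter> B) top)) top \<le> act (lrad (mres act A top)) top"
      by (intro act_mono1[OF LM] rad_mono[OF assms(1)] mres_mono) simp
    show "act (lrad (mres act (A \<sqinter> B) top)) top \<le> act (lrad (mres act B top)) top"
      by (intro act_mono1[OF LM] rad_mono[OF assms(1)] mres_mono) simp
  qed
  have sq: "n * n \<le> c"
    if N: "principal_melem act N" "N \<le> act c top" "N = act n top" for N n c
  proof -
    define z where "z = mres act bot N"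
    have "act n N \<le> act c N"
    proof -
      have "act n N \<le> act n (act c top)" using N(2) by (rule act_mono2[OF LM])
      also have "\<dots> = act c N" using N(3) act_mul[OF LM] by (metis mult.commute)
      finally show ?thesis .
    qed
    then have "n \<le> mres act (sup (act c N) bot) N" by (simp add: mres_ge)
    also have "\<dots> = sup c z" unfolding z_def using N(1) unfolding principal_melem_def by metis
    finally have nz: "n \<le> sup c z" .
    have "act (z * n) top = act z N" using N(3) act_mul[OF LM] by metis
    also have "\<dots> \<le> bot" unfolding z_def by (rule mres_le[OF LM])
    finally have "z * n \<le> mres act bot top" by (rule mres_ge)
    then have zn: "n * z = bot" using assms(4) unfolding faithful_module_def by (simp add: mult.commute bot_unique)
    have "n * n \<le> n * sup c z" using nz by (rule ml_mono[OF assms(1)])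
    also have "\<dots> = sup (n * c) (n * z)" by (rule ml_sup[OF assms(1)])
    also have "\<dots> = n * c" using zn by simp
    also have "\<dots> \<le> c" by (rule ml_le'[OF assms(1)])
    finally show ?thesis .
  qed
  have le2: "inf (delta1 act A) (delta1 act B) \<le> delta1 act (inf A B)"
  proof -
    obtain S where S: "\<forall>N\<in>S. principal_melem act N" "inf (delta1 act A) (delta1 act B) = Sup S"
      using assms(6) unfolding PG_lattice_module_def by blast
    have "N \<le> act r top" if NS: "N \<in> S" for N
    proof -
      have Nle: "N \<le> inf (delta1 act A) (delta1 act B)" using S NS by (simp add: Sup_upper)
      define n where "n = mres act N top"
      obtain x where x: "N = act x top" using assms(5) unfolding multiplication_module_def by blast
      have "N \<le> act n top" unfolding x n_def by (rule act_mono1[OF LM]) (rule mres_ge, simp add: x)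
      moreover have "act n top \<le> N" unfolding n_def by (rule mres_le[OF LM])
      ultimately have Nn: "N = act n top" by simp
      have "n * n \<le> lrad a" using sq[OF bspec[OF S(1) NS] _ Nn] Nle unfolding delta1_def a_def by simp
      moreover have "n * n \<le> lrad b" using sq[OF bspec[OF S(1) NS] _ Nn] Nle unfolding delta1_def b_def by simp
      ultimately have "n \<le> lrad (inf a b)" by (rule key_rad[OF assms(1)])
      also have "\<dots> \<le> r" unfolding r_def using abr by (rule rad_mono[OF assms(1)])
      finally show ?thesis using Nn act_mono1[OF LM] by metis
    qed
    then have "Sup S \<le> act r top" by (simp add: Sup_least)
    then show ?thesis using S unfolding delta1_def r_def by simp
  qed
  show ?thesis using le1 le2 by (rule antisym)
qed

end
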